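(* Assume (H1) and (H3). For any compact set $K\subset\mathbb R\setminus\{0\}$ there exist constants $c_K>0$ and $c_K'>0$ such that for every $n\geqslant1$, \[ \sup_{t\in K}\|\mathbf P_t^n\|_{\mathscr C\to\mathscr C}\leqslant c_Ke^{-c_K'n}. \]
   Context: $\mathbb X$ is a finite set, $\mathbf P$ a Markov transition matrix on $\mathbb X$, $f:\mathbb X\to\mathbb R$. $\mathscr C$ is the space of complex functions on $\mathbb X$ with $\|g\|_\infty=\max_x|g(x)|$, and for an operator $R$ on $\mathscr C$, $\|R\|_{\mathscr C\to\mathscr C}=\sup_{g\neq0}\|Rg\|_\infty/\|g\|_\infty$. (H1): there exists $k_0\geqslant1$ such that $\mathbf P^{k_0}g(x)>0$ for all $x$ and every non-negative, not identically zero $g$. (H3): for every $(\theta,a)\in\mathbb R^2$ there exist $n\geqslant0$ and $x_0,\dots,x_n$ with $\mathbf P(x_0,x_1)\cdots\mathbf P(x_{n-1},x_n)\mathbf P(x_n,x_0)>0$ and $f(x_0)+\dots+f(x_n)-(n+1)\theta\notin a\mathbb Z$. For $t\in\mathbb R$, $\mathbf P_tg(x)=\sum_{x'}e^{itf(x')}g(x')\mathbf P(x,x')$. *)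

theory Defs
  imports "HOL-Analysis.Analysis"
begin

definition markov_matrix :: "('x::finite \<Rightarrow> 'x \<Rightarrow> real) \<Rightarrow> bool" where
  "markov_matrix P \<longleftrightarrow> (\<forall>x y. 0 \<le> P x y) \<and> (\<forall>x. (\<Sum>y\<in>UNIV. P x y) = 1)"

definition markov_op :: "('x::finite \<Rightarrow> 'x \<Rightarrow> real) \<Rightarrow> ('x \<Rightarrow> real) \<Rightarrow> 'x \<Rightarrow> real" where
  "markov_op P g x = (\<Sum>x'\<in>UNIV. g x' * P x x')"

definition H1 :: "('x::finite \<Rightarrow> 'x \<Rightarrow> real) \<Rightarrow> bool" where
  "H1 P \<longleftrightarrow> (\<exists>k0::nat. k0 \<ge> 1 \<and>
     (\<forall>g::'x \<Rightarrow> real. (\<forall>x. 0 \<le> g x) \<and> (\<exists>x. g x \<noteq> 0) \<longrightarrow>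
        (\<forall>x. ((markov_op P ^^ k0) g) x > 0)))"

definition H3 :: "('x::finite \<Rightarrow> 'x \<Rightarrow> real) \<Rightarrow> ('x \<Rightarrow> real) \<Rightarrow> bool" where
  "H3 P f \<longleftrightarrow> (\<forall>\<theta> a::real. \<exists>(n::nat) (xs::nat \<Rightarrow> 'x).
     (\<Prod>i<n. P (xs i) (xs (Suc i))) * P (xs n) (xs 0) > 0 \<and>
     (\<Sum>i\<le>n. f (xs i)) - real (n + 1) * \<theta> \<notin> {a * of_int k | k. True})"

definition Pt :: "('x::finite \<Rightarrow> 'x \<Rightarrow> real) \<Rightarrow> ('x \<Rightarrow> real) \<Rightarrow> real
                  \<Rightarrow> ('x \<Rightarrow> complex) \<Rightarrow> 'x \<Rightarrow> complex" where
  "Pt P f t g x = (\<Sum>x'\<in>UNIV. exp (\<i> * complex_of_real (t * f x')) * g x' * complex_of_real (P x x'))"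

definition sup_norm :: "('x::finite \<Rightarrow> complex) \<Rightarrow> real" where
  "sup_norm g = Max (range (\<lambda>x. cmod (g x)))"

definition op_norm :: "(('x::finite \<Rightarrow> complex) \<Rightarrow> ('x \<Rightarrow> complex)) \<Rightarrow> real" where
  "op_norm R = (SUP g\<in>{g. \<exists>x. g x \<noteq> 0}. sup_norm (R g) / sup_norm g)"

end

theory Submission
  imports Defs
begin

definition Ee :: "('x \<Rightarrow> real) \<Rightarrow> real \<Rightarrow> 'x \<Rightarrow> complex" where
  "Ee f t y = exp (\<i> * complex_of_real (t * f y))"

fun Rm :: "('x::finite \<Rightarrow> 'x \<Rightarrow> real) \<Rightarrow> nat \<Rightarrow> 'x \<Rightarrow> 'x \<Rightarrow> real" where
  "Rm P 0 x z = (if x = z then 1 else 0)"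
| "Rm P (Suc n) x z = (\<Sum>y\<in>UNIV. P x y * Rm P n y z)"

fun Qm :: "('x::finite \<Rightarrow> 'x \<Rightarrow> real) \<Rightarrow> ('x \<Rightarrow> real) \<Rightarrow> real \<Rightarrow> nat \<Rightarrow> 'x \<Rightarrow> 'x \<Rightarrow> complex" where
  "Qm P f t 0 x z = (if x = z then 1 else 0)"
| "Qm P f t (Suc n) x z = (\<Sum>y\<in>UNIV. (Ee f t y * complex_of_real (P x y)) * Qm P f t n y z)"

lemma ifmult: "(if b then 1 else 0) * (a::'a::semiring_1) = (if b then a else 0)" by simp

lemma multif: "(a::'a::semiring_1) * (if b then 1 else 0) = (if b then a else 0)" by simp

lemma norm_Ee [simp]: "cmod (Ee f t y) = 1"
  unfolding Ee_def by (metis norm_exp_i_times)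

lemma Rm_add: "Rm P (a + b) x z = (\<Sum>y\<in>UNIV. Rm P a x y * Rm P b y z)"
proof (induction a arbitrary: x)
  case 0
  then show ?case by (simp add: ifmult)
next
  case (Suc a)
  have "Rm P (Suc a + b) x z = (\<Sum>w\<in>UNIV. P x w * (\<Sum>y\<in>UNIV. Rm P a w y * Rm P b y z))"
    using Suc by simp
  also have "\<dots> = (\<Sum>w\<in>UNIV. \<Sum>y\<in>UNIV. P x w * Rm P a w y * Rm P b y z)"
    by (rule sum.cong[OF refl]) (simp add: sum_distrib_left mult.assoc)
  also have "\<dots> = (\<Sum>y\<in>UNIV. \<Sum>w\<in>UNIV. P x w * Rm P a w y * Rm P b y z)"
    by (rule sum.swap)
  also have "\<dots> = (\<Sum>y\<in>UNIV. (\<Sum>w\<in>UNIV. P x w * Rm P a w y) * Rm P b y z)"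
    by (simp add: sum_distrib_right)
  finally show ?case by simp
qed

lemma Qm_add: "Qm P f t (a + b) x z = (\<Sum>y\<in>UNIV. Qm P f t a x y * Qm P f t b y z)"
proof (induction a arbitrary: x)
  case 0
  then show ?case by (simp add: ifmult)
next
  case (Suc a)
  have "Qm P f t (Suc a + b) x z = (\<Sum>w\<in>UNIV. (Ee f t w * complex_of_real (P x w)) * (\<Sum>y\<in>UNIV. Qm P f t a w y * Qm P f t b y z))"
    using Suc by simp
  also have "\<dots> = (\<Sum>w\<in>UNIV. \<Sum>y\<in>UNIV. (Ee f t w * complex_of_real (P x w)) * Qm P f t a w y * Qm P f t b y z)"
    by (rule sum.cong[OF refl]) (simp add: sum_distrib_left mult.assoc)
  also have "\<dots> = (\<Sum>y\<in>UNIV. \<Sum>w\<in>UNIV. (Ee f t w * complex_of_real (P x w)) * Qm P f t a w y * Qm P f t b y z)"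
    by (rule sum.swap)
  also have "\<dots> = (\<Sum>y\<in>UNIV. (\<Sum>w\<in>UNIV. (Ee f t w * complex_of_real (P x w)) * Qm P f t a w y) * Qm P f t b y z)"
    by (simp add: sum_distrib_right)
  finally show ?case by simp
qed

lemma Rm_nonneg:
  assumes "markov_matrix P" shows "0 \<le> Rm P n x z"
  using assms by (induction n arbitrary: x) (auto simp: markov_matrix_def intro!: sum_nonneg)

lemma Rm_sum:
  assumes "markov_matrix P" shows "(\<Sum>z\<in>UNIV. Rm P n x z) = 1"
proof (induction n arbitrary: x)
  case 0
  then show ?case by simp
next
  case (Suc n)
  have "(\<Sum>z\<in>UNIV. Rm P (Suc n) x z) = (\<Sum>z\<in>UNIV. \<Sum>y\<in>UNIV. P x y * Rm P n y z)"
    by simp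
  also have "\<dots> = (\<Sum>y\<in>UNIV. \<Sum>z\<in>UNIV. P x y * Rm P n y z)"
    by (rule sum.swap)
  also have "\<dots> = (\<Sum>y\<in>UNIV. P x y * (\<Sum>z\<in>UNIV. Rm P n y z))"
    by (simp add: sum_distrib_left)
  also have "\<dots> = 1" using Suc assms by (simp add: markov_matrix_def)
  finally show ?case .
qed

lemma Rm_one: "Rm P 1 x z = P x z"
  by (simp add: multif)

lemma Qm_one: "Qm P f t 1 x z = Ee f t z * complex_of_real (P x z)"
  by (simp add: multif)

lemma Qm_le:
  assumes "markov_matrix P" shows "cmod (Qm P f t n x z) \<le> Rm P n x z"
proof (induction n arbitrary: x)
  case 0
  then show ?case by simp
next
  case (Suc n)
  have "cmod (Qm P f t (Suc n) x z) \<le> (\<Sum>y\<in>UNIV. cmod ((Ee f t y * complex_of_real (P x y)) * Qm P f t n y z))"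
    unfolding Qm.simps by (rule norm_sum)
  also have "\<dots> \<le> (\<Sum>y\<in>UNIV. P x y * Rm P n y z)"
  proof (rule sum_mono)
    fix y
    have p: "0 \<le> P x y" using assms by (simp add: markov_matrix_def)
    have "cmod ((Ee f t y * complex_of_real (P x y)) * Qm P f t n y z) = P x y * cmod (Qm P f t n y z)"
      using p by (simp add: norm_mult)
    also have "\<dots> \<le> P x y * Rm P n y z" using p Suc[of y] by (rule mult_left_mono[rotated])
    finally show "cmod ((Ee f t y * complex_of_real (P x y)) * Qm P f t n y z) \<le> P x y * Rm P n y z" .
  qed
  finally show ?case by (simp only: Rm.simps)
qed

lemma Pt_apply: "Pt P f t h x = (\<Sum>x'\<in>UNIV. exp (\<i> * complex_of_real (t * f x')) * h x' * complex_of_real (P x x'))"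
  by (simp add: Pt_def)

lemma mo_apply: "markov_op P h x = (\<Sum>x'\<in>UNIV. h x' * P x x')"
  by (simp add: markov_op_def)

lemma Pt_pow: "(Pt P f t ^^ n) g x = (\<Sum>z\<in>UNIV. Qm P f t n x z * g z)"
proof (induction n arbitrary: x)
  case 0
  then show ?case by (simp add: ifmult)
next
  case (Suc n)
  have "(Pt P f t ^^ Suc n) g x = (\<Sum>y\<in>UNIV. Ee f t y * (\<Sum>z\<in>UNIV. Qm P f t n y z * g z) * complex_of_real (P x y))"
    by (simp only: funpow.simps comp_apply Pt_apply Suc Ee_def)
  also have "\<dots> = (\<Sum>y\<in>UNIV. \<Sum>z\<in>UNIV. (Ee f t y * complex_of_real (P x y)) * Qm P f t n y z * g z)"
    by (rule sum.cong[OF refl]) (simp add: sum_distrib_left mult_ac)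
  also have "\<dots> = (\<Sum>z\<in>UNIV. \<Sum>y\<in>UNIV. (Ee f t y * complex_of_real (P x y)) * Qm P f t n y z * g z)"
    by (rule sum.swap)
  also have "\<dots> = (\<Sum>z\<in>UNIV. Qm P f t (Suc n) x z * g z)"
    by (simp add: sum_distrib_right)
  finally show ?case .
qed

lemma markov_pow: "(markov_op P ^^ n) g x = (\<Sum>z\<in>UNIV. Rm P n x z * g z)"
proof (induction n arbitrary: x)
  case 0
  then show ?case by (simp add: ifmult)
next
  case (Suc n)
  have "(markov_op P ^^ Suc n) g x = (\<Sum>y\<in>UNIV. (\<Sum>z\<in>UNIV. Rm P n y z * g z) * P x y)"
    by (simp only: funpow.simps comp_apply mo_apply Suc)
  also have "\<dots> = (\<Sum>y\<in>UNIV. \<Sum>z\<in>UNIV. P x y * Rm P n y z * g z)"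
    by (rule sum.cong[OF refl]) (simp add: sum_distrib_left sum_distrib_right mult_ac)
  also have "\<dots> = (\<Sum>z\<in>UNIV. \<Sum>y\<in>UNIV. P x y * Rm P n y z * g z)"
    by (rule sum.swap)
  also have "\<dots> = (\<Sum>z\<in>UNIV. Rm P (Suc n) x z * g z)"
    by (simp add: sum_distrib_right)
  finally show ?case .
qed

lemma H1_pos:
  assumes m: "markov_matrix P" and h: "H1 P"
  obtains k0 where "k0 \<ge> 1" "\<And>k x z. k \<ge> k0 \<Longrightarrow> Rm P k x z > 0"
proof -
  obtain k0 where k0: "k0 \<ge> 1" and hk: "\<And>g::'a \<Rightarrow> real. (\<forall>x. 0 \<le> g x) \<and> (\<exists>x. g x \<noteq> 0) \<Longrightarrow>
        (\<forall>x. ((markov_op P ^^ k0) g) x > 0)"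
    using h unfolding H1_def by blast
  have base: "Rm P k0 x z > 0" for x z
  proof -
    have "((markov_op P ^^ k0) (\<lambda>y. if y = z then 1 else 0)) x > 0"
      using hk[of "\<lambda>y. if y = z then 1 else 0"] by auto
    then show ?thesis by (simp add: markov_pow multif)
  qed
  have "Rm P k x z > 0" if "k \<ge> k0" for k x z
  proof -
    define j where "j = k - k0"
    have j: "k = j + k0" using that by (simp add: j_def)
    have "(\<Sum>y\<in>UNIV. Rm P j x y) = 1" using Rm_sum[OF m] .
    then obtain y where y: "Rm P j x y > 0"
      by (metis Rm_nonneg[OF m] less_eq_real_def sum_nonneg_eq_0_iff finite zero_neq_one)
    have "Rm P j x y * Rm P k0 y z \<le> (\<Sum>w\<in>UNIV. Rm P j x w * Rm P k0 w z)"
      by (rule member_le_sum) (auto intro: mult_nonneg_nonneg Rm_nonneg[OF m])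
    moreover have "Rm P j x y * Rm P k0 y z > 0" using y base by simp
    ultimately show ?thesis by (simp add: j Rm_add)
  qed
  with k0 show ?thesis using that by blast
qed

lemma strict_prop:
  assumes m: "markov_matrix P" and s: "cmod (Qm P f t b v z) < Rm P b v z" and r: "Rm P a x v > 0"
  shows "cmod (Qm P f t (a + b) x z) < Rm P (a + b) x z"
proof -
  have "cmod (Qm P f t (a + b) x z) \<le> (\<Sum>y\<in>UNIV. cmod (Qm P f t a x y * Qm P f t b y z))"
    unfolding Qm_add by (rule norm_sum)
  also have "\<dots> < (\<Sum>y\<in>UNIV. Rm P a x y * Rm P b y z)"
  proof (rule sum_strict_mono_ex1)
    show "\<forall>y\<in>UNIV. cmod (Qm P f t a x y * Qm P f t b y z) \<le> Rm P a x y * Rm P b y z"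
      by (auto simp: norm_mult intro!: mult_mono Qm_le[OF m] Rm_nonneg[OF m])
    have "cmod (Qm P f t a x v) * cmod (Qm P f t b v z) \<le> Rm P a x v * cmod (Qm P f t b v z)"
      by (auto intro!: mult_right_mono Qm_le[OF m])
    also have "\<dots> < Rm P a x v * Rm P b v z" using r s by simp
    finally show "\<exists>y\<in>UNIV. cmod (Qm P f t a x y * Qm P f t b y z) < Rm P a x y * Rm P b y z"
      by (auto simp: norm_mult)
  qed auto
  finally show ?thesis by (simp add: Rm_add)
qed

lemma tri_eq:
  fixes c :: "'a \<Rightarrow> complex"
  assumes fin: "finite A" and eq: "cmod (sum c A) = (\<Sum>y\<in>A. cmod (c y))" and nz: "sum c A \<noteq> 0"
    and y: "y \<in> A"
  shows "c y = complex_of_real (cmod (c y) / cmod (sum c A)) * sum c A"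
proof -
  define s where "s = sum c A"
  have le: "Re (cnj s * c w) \<le> cmod s * cmod (c w)" for w
    by (metis complex_Re_le_cmod complex_mod_cnj norm_mult)
  have "(\<Sum>w\<in>A. Re (cnj s * c w)) = Re (cnj s * s)"
    by (simp add: s_def sum_distrib_left)
  also have "\<dots> = cmod s * cmod s"
    by (simp only: mult.commute[of "cnj s"] complex_norm_square[symmetric] Re_complex_of_real power2_eq_square)
  also have "\<dots> = (\<Sum>w\<in>A. cmod s * cmod (c w))"
    using eq by (simp add: s_def sum_distrib_left)
  finally have "(\<Sum>w\<in>A. cmod s * cmod (c w) - Re (cnj s * c w)) = 0"
    by (simp add: sum_subtractf)
  then have "\<forall>w\<in>A. cmod s * cmod (c w) - Re (cnj s * c w) = 0"
    using fin le by (subst sum_nonneg_eq_0_iff[symmetric]) (auto simp: algebra_simps)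
  then have re: "Re (cnj s * c y) = cmod (cnj s * c y)" using y by (simp add: norm_mult)
  have im: "Im (cnj s * c y) = 0"
  proof -
    have "(cmod (cnj s * c y))\<^sup>2 = (Re (cnj s * c y))\<^sup>2 + (Im (cnj s * c y))\<^sup>2"
      by (simp add: cmod_power2)
    then show ?thesis using re by simp
  qed
  have "cnj s * c y = complex_of_real (cmod s * cmod (c y))"
    using re im by (simp add: complex_eq_iff norm_mult)
  then have "s * (cnj s * c y) = s * complex_of_real (cmod s * cmod (c y))" by simp
  then have e1: "complex_of_real ((cmod s)\<^sup>2) * c y = s * complex_of_real (cmod s * cmod (c y))"
    by (simp only: complex_norm_square mult.assoc)
  have ns: "cmod s \<noteq> 0" using nz s_def by simp
  have e2: "complex_of_real ((cmod s)\<^sup>2) * (complex_of_real (cmod (c y) / cmod s) * s) = s * complex_of_real (cmod s * cmod (c y))"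
    using ns by (simp add: field_simps power2_eq_square)
  have "complex_of_real ((cmod s)\<^sup>2) \<noteq> 0" using ns by simp
  then have "c y = complex_of_real (cmod (c y) / cmod s) * s"
    using e1 e2 by (metis mult_left_cancel)
  then show ?thesis unfolding s_def .
qed

definition ph :: "('x::finite \<Rightarrow> 'x \<Rightarrow> real) \<Rightarrow> ('x \<Rightarrow> real) \<Rightarrow> real \<Rightarrow> nat \<Rightarrow> 'x \<Rightarrow> 'x \<Rightarrow> complex" where
  "ph P f t n x z = Qm P f t n x z / complex_of_real (Rm P n x z)"

lemma ph_norm:
  assumes "cmod (Qm P f t n x z) = Rm P n x z" "Rm P n x z > 0"
  shows "cmod (ph P f t n x z) = 1"
  using assms by (simp add: ph_def norm_divide)

lemma Rm_split_ge:
  assumes m: "markov_matrix P"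
  shows "Rm P a x y * Rm P b y z \<le> Rm P (a + b) x z"
  unfolding Rm_add
  by (rule member_le_sum) (auto intro: mult_nonneg_nonneg Rm_nonneg[OF m])

lemma align_split:
  assumes m: "markov_matrix P"
    and al: "cmod (Qm P f t (a + b) x z) = Rm P (a + b) x z"
    and ra: "Rm P a x y > 0" and rb: "Rm P b y z > 0"
  shows "cmod (Qm P f t a x y) = Rm P a x y \<and> cmod (Qm P f t b y z) = Rm P b y z
         \<and> ph P f t a x y * ph P f t b y z = ph P f t (a + b) x z"
proof -
  define c where "c w = Qm P f t a x w * Qm P f t b w z" for w
  define s where "s = Qm P f t (a + b) x z"
  have s_sum: "s = sum c UNIV" by (simp add: s_def c_def Qm_add)
  have cle: "cmod (c w) \<le> Rm P a x w * Rm P b w z" for w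
    by (auto simp: c_def norm_mult intro!: mult_mono Qm_le[OF m] Rm_nonneg[OF m])
  have "(\<Sum>w\<in>UNIV. cmod (c w)) \<le> (\<Sum>w\<in>UNIV. Rm P a x w * Rm P b w z)"
    by (rule sum_mono) (rule cle)
  also have "\<dots> = cmod s" using al by (simp add: s_def Rm_add)
  finally have up: "(\<Sum>w\<in>UNIV. cmod (c w)) \<le> cmod s" .
  have dn: "cmod s \<le> (\<Sum>w\<in>UNIV. cmod (c w))" unfolding s_sum by (rule norm_sum)
  have eq: "cmod (sum c UNIV) = (\<Sum>w\<in>UNIV. cmod (c w))" using up dn s_sum by simp
  have "(\<Sum>w\<in>UNIV. Rm P a x w * Rm P b w z - cmod (c w)) = 0"
    using up dn al by (simp add: sum_subtractf s_def Rm_add)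
  then have "\<forall>w\<in>UNIV. Rm P a x w * Rm P b w z - cmod (c w) = 0"
    by (subst sum_nonneg_eq_0_iff[symmetric]) (auto simp: cle)
  then have cy: "cmod (c y) = Rm P a x y * Rm P b y z" by simp
  have qa: "cmod (Qm P f t a x y) \<le> Rm P a x y" and qb: "cmod (Qm P f t b y z) \<le> Rm P b y z"
    using Qm_le[OF m] by auto
  have ea: "cmod (Qm P f t a x y) = Rm P a x y"
  proof (rule ccontr)
    assume "cmod (Qm P f t a x y) \<noteq> Rm P a x y"
    then have lt: "cmod (Qm P f t a x y) < Rm P a x y" using qa by simp
    have "cmod (c y) \<le> cmod (Qm P f t a x y) * Rm P b y z"
      by (auto simp: c_def norm_mult intro!: mult_left_mono qb)
    also have "\<dots> < Rm P a x y * Rm P b y z" using lt rb by simp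
    finally show False using cy by simp
  qed
  have eb: "cmod (Qm P f t b y z) = Rm P b y z"
  proof (rule ccontr)
    assume "cmod (Qm P f t b y z) \<noteq> Rm P b y z"
    then have lt: "cmod (Qm P f t b y z) < Rm P b y z" using qb by simp
    have "cmod (c y) \<le> Rm P a x y * cmod (Qm P f t b y z)"
      by (auto simp: c_def norm_mult intro!: mult_right_mono qa)
    also have "\<dots> < Rm P a x y * Rm P b y z" using lt ra by simp
    finally show False using cy by simp
  qed
  have rs: "Rm P a x y * Rm P b y z \<le> Rm P (a + b) x z" by (rule Rm_split_ge[OF m])
  have pos: "Rm P (a + b) x z > 0" using rs ra rb by (smt (verit) mult_pos_pos)
  have snz: "sum c UNIV \<noteq> 0" using al pos s_sum s_def by auto
  have "c y = complex_of_real (cmod (c y) / cmod (sum c UNIV)) * sum c UNIV"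
    by (rule tri_eq[OF _ eq snz]) auto
  then have cyv: "c y = complex_of_real (Rm P a x y * Rm P b y z / Rm P (a + b) x z) * s"
    using cy al s_sum s_def by simp
  have "ph P f t a x y * ph P f t b y z = c y / complex_of_real (Rm P a x y * Rm P b y z)"
    by (simp add: ph_def c_def)
  also have "\<dots> = s / complex_of_real (Rm P (a + b) x z)"
    using cyv ra rb pos by (simp add: field_simps)
  finally have "ph P f t a x y * ph P f t b y z = ph P f t (a + b) x z" by (simp add: ph_def s_def)
  with ea eb show ?thesis by simp
qed

lemma walk:
  assumes m: "markov_matrix P" and pp: "(\<Prod>i<n. P (xs i) (xs (Suc i))) > 0"
  shows "Rm P n (xs 0) (xs n) > 0 \<and>
    (cmod (Qm P f t n (xs 0) (xs n)) = Rm P n (xs 0) (xs n) \<longrightarrow>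
       ph P f t n (xs 0) (xs n) = (\<Prod>i<n. Ee f t (xs (Suc i))))"
  using pp
proof (induction n)
  case 0
  then show ?case by (simp add: ph_def)
next
  case (Suc n)
  have nn: "(\<Prod>i<n. P (xs i) (xs (Suc i))) \<ge> 0"
    using m by (auto simp: markov_matrix_def intro!: prod_nonneg)
  have pn: "P (xs n) (xs (Suc n)) \<ge> 0" using m by (simp add: markov_matrix_def)
  have prod: "(\<Prod>i<n. P (xs i) (xs (Suc i))) * P (xs n) (xs (Suc n)) > 0" using Suc.prems by simp
  then have p1: "(\<Prod>i<n. P (xs i) (xs (Suc i))) > 0" and p2: "P (xs n) (xs (Suc n)) > 0"
    using nn pn by (auto simp: zero_less_mult_iff)
  note IH = Suc.IH[OF p1]
  have r1: "Rm P 1 (xs n) (xs (Suc n)) > 0" unfolding Rm_one using p2 .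
  have "Rm P n (xs 0) (xs n) * Rm P 1 (xs n) (xs (Suc n)) \<le> Rm P (n + 1) (xs 0) (xs (Suc n))"
    by (rule Rm_split_ge[OF m])
  then have rpos: "Rm P (Suc n) (xs 0) (xs (Suc n)) > 0" using IH r1
    by (smt (verit) Suc_eq_plus1 mult_pos_pos)
  show ?case
  proof (intro conjI impI rpos)
    assume al: "cmod (Qm P f t (Suc n) (xs 0) (xs (Suc n))) = Rm P (Suc n) (xs 0) (xs (Suc n))"
    have al': "cmod (Qm P f t (n + 1) (xs 0) (xs (Suc n))) = Rm P (n + 1) (xs 0) (xs (Suc n))"
      using al by simp
    note sp = align_split[OF m al' conjunct1[OF IH] r1]
    have "ph P f t 1 (xs n) (xs (Suc n)) = Ee f t (xs (Suc n))"
      unfolding ph_def Rm_one Qm_one using p2 by simp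
    then have "ph P f t (n + 1) (xs 0) (xs (Suc n)) = (\<Prod>i<n. Ee f t (xs (Suc i))) * Ee f t (xs (Suc n))"
      using sp IH by metis
    then show "ph P f t (Suc n) (xs 0) (xs (Suc n)) = (\<Prod>i<Suc n. Ee f t (xs (Suc i)))"
      by simp
  qed
qed

lemma Ee_prod: "(\<Prod>i\<in>I. Ee f t (g i)) = exp (\<i> * complex_of_real (t * (\<Sum>i\<in>I. f (g i))))"
proof -
  have "(\<Prod>i\<in>I. Ee f t (g i)) = (\<Prod>i\<in>I. exp (\<i> * complex_of_real (t * f (g i))))"
    by (simp add: Ee_def)
  also have "\<dots> = exp (\<Sum>i\<in>I. \<i> * complex_of_real (t * f (g i)))"
    by (cases "finite I") (simp_all add: exp_sum)
  also have "(\<Sum>i\<in>I. \<i> * complex_of_real (t * f (g i))) = \<i> * complex_of_real (t * (\<Sum>i\<in>I. f (g i)))"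
    by (simp add: sum_distrib_left)
  finally show ?thesis .
qed

lemma core_vv:
  assumes m: "markov_matrix P" and h1: "H1 P" and h3: "H3 P f" and t: "t \<noteq> 0"
  shows "\<exists>l. cmod (Qm P f t l v v) < Rm P l v v"
proof (rule ccontr)
  assume "\<not> ?thesis"
  then have A: "cmod (Qm P f t l v v) = Rm P l v v" for l
    using Qm_le[OF m, of f t l v v] by (meson antisym not_le)
  obtain k0 where k0: "k0 \<ge> 1" and pos: "\<And>k x z. k \<ge> k0 \<Longrightarrow> Rm P k x z > 0"
    using H1_pos[OF m h1] by blast
  define G where "G l = ph P f t l v v" for l
  have Gn: "cmod (G l) = 1" if "l \<ge> k0" for l
    unfolding G_def using ph_norm[OF A pos[OF that]] .
  have Gm: "G (l1 + l2) = G l1 * G l2" if "l1 \<ge> k0" "l2 \<ge> k0" for l1 l2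
    using align_split[OF m A pos[OF that(1)] pos[OF that(2)]] unfolding G_def by simp
  define d where "d = G (k0 + 1) / G k0"
  have Gk0: "G k0 \<noteq> 0" using Gn[of k0] by auto
  have step: "G (l + 1) = G l * d" if "l \<ge> k0" for l
  proof -
    have "G (l + 1) * G k0 = G (l + (k0 + 1))" using Gm[of "l + 1" k0] that by (simp add: ac_simps)
    also have "\<dots> = G l * G (k0 + 1)" using Gm[of l "k0 + 1"] that by simp
    finally show ?thesis using Gk0 by (simp add: d_def field_simps)
  qed
  have iter: "G (k0 + j) = G k0 * d ^ j" for j
    by (induction j) (auto simp: step[of "k0 + _", simplified] mult.assoc)
  have "G (k0 + k0) = G k0 * G k0" by (rule Gm) simp_all
  then have "G k0 * G k0 = G k0 * d ^ k0" using iter[of k0] by metis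
  then have Gk0d: "G k0 = d ^ k0" using Gk0 by (metis mult_cancel_left)
  have Gpow: "G l = d ^ l" if "l \<ge> k0" for l
  proof -
    have "l = k0 + (l - k0)" using that by simp
    then have "G l = G k0 * d ^ (l - k0)" using iter by metis
    also have "\<dots> = d ^ (k0 + (l - k0))" by (simp add: Gk0d power_add)
    finally show ?thesis using that by simp
  qed
  have dn: "cmod d = 1" using Gn[of k0] Gn[of "k0 + 1"] by (simp add: d_def norm_divide)
  define \<theta> where "\<theta> = Arg d / t"
  have dexp: "exp (\<i> * complex_of_real (t * \<theta>)) = d"
  proof -
    have "d \<noteq> 0" using dn by auto
    then have "cis (Arg d) = d" using dn by (simp add: cis_Arg sgn_div_norm)
    then show ?thesis using t by (simp add: \<theta>_def cis_conv_exp)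
  qed
  obtain n xs where cyc: "(\<Prod>i<n. P (xs i) (xs (Suc i))) * P (xs n) (xs 0) > 0"
    and notin: "(\<Sum>i\<le>n. f (xs i)) - real (n + 1) * \<theta> \<notin> {(2 * pi / t) * of_int k | k. True}"
    using h3 unfolding H3_def by blast
  define ys where "ys i = (if i \<le> n then xs i else xs 0)" for i
  define L where "L = Suc n"
  define x0 where "x0 = xs 0"
  have ys0: "ys 0 = x0" and ysL: "ys L = x0" by (simp_all add: ys_def L_def x0_def)
  have pys: "(\<Prod>i<L. P (ys i) (ys (Suc i))) = (\<Prod>i<n. P (xs i) (xs (Suc i))) * P (xs n) (xs 0)"
    unfolding L_def by (simp add: ys_def)
  note W = walk[OF m, where n=L and xs=ys and f=f and t=t, unfolded pys ys0 ysL, OF cyc]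
  define S where "S = (\<Sum>i\<le>n. f (xs i))"
  have Ssum: "(\<Sum>i<L. f (ys (Suc i))) = S"
  proof -
    have "(\<Sum>i<L. f (ys (Suc i))) = (\<Sum>i<n. f (xs (Suc i))) + f (xs 0)"
      unfolding L_def by (simp add: ys_def)
    moreover have "S = f (xs 0) + (\<Sum>i<n. f (xs (Suc i)))"
      unfolding S_def lessThan_Suc_atMost[symmetric] by (rule sum.lessThan_Suc_shift)
    ultimately show ?thesis by simp
  qed
  have rv0: "Rm P k0 v x0 > 0" and r0v: "Rm P k0 x0 v > 0" and rL: "Rm P (L + k0) x0 v > 0"
    using pos by auto
  note sp1 = align_split[OF m A[of "k0 + (L + k0)"] rv0 rL]
  note sp2 = align_split[OF m conjunct1[OF conjunct2[OF sp1]] conjunct1[OF W] r0v]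
  note sp3 = align_split[OF m A[of "k0 + k0"] rv0 r0v]
  have phL: "ph P f t L x0 x0 = exp (\<i> * complex_of_real (t * S))"
    using W sp2 by (simp add: Ee_prod Ssum)
  define \<alpha> where "\<alpha> = ph P f t k0 v x0"
  define \<beta> where "\<beta> = ph P f t k0 x0 v"
  have an: "\<alpha> \<noteq> 0" using ph_norm[OF conjunct1[OF sp1] rv0] unfolding \<alpha>_def by auto
  have bn: "\<beta> \<noteq> 0" using ph_norm[OF conjunct1[OF conjunct2[OF sp2]] r0v] unfolding \<beta>_def by auto
  have e1: "\<alpha> * (ph P f t L x0 x0 * \<beta>) = d ^ (k0 + (L + k0))"
    using sp1 sp2 Gpow[of "k0 + (L + k0)"] unfolding \<alpha>_def \<beta>_def G_def by simp
  have e2: "\<alpha> * \<beta> = d ^ (k0 + k0)"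
    using sp3 Gpow[of "k0 + k0"] unfolding \<alpha>_def \<beta>_def G_def by simp
  have "ph P f t L x0 x0 * (\<alpha> * \<beta>) = d ^ L * (\<alpha> * \<beta>)"
  proof -
    have "ph P f t L x0 x0 * (\<alpha> * \<beta>) = \<alpha> * (ph P f t L x0 x0 * \<beta>)" by (simp add: ac_simps)
    also have "\<dots> = d ^ (k0 + (L + k0))" by (rule e1)
    also have "\<dots> = d ^ L * d ^ (k0 + k0)" by (simp add: power_add[symmetric] ac_simps)
    finally show ?thesis using e2 by simp
  qed
  then have "ph P f t L x0 x0 = d ^ L" using an bn by simp
  then have "exp (\<i> * complex_of_real (t * S)) = exp (of_nat L * (\<i> * complex_of_real (t * \<theta>)))"
    using phL dexp by (simp add: exp_of_nat_mult)
  then obtain k :: int where k: "\<i> * complex_of_real (t * S) = of_nat L * (\<i> * complex_of_real (t * \<theta>)) + (of_int (2 * k) * pi) * \<i>"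
    unfolding exp_eq by blast
  have "t * S = real L * (t * \<theta>) + 2 * pi * of_int k"
    using arg_cong[OF k, of Im] by simp
  then have "S - real (n + 1) * \<theta> = (2 * pi / t) * of_int k"
    using t unfolding L_def by (simp add: field_simps)
  then show False using notin unfolding S_def by blast
qed

definition rowQ :: "('x::finite \<Rightarrow> 'x \<Rightarrow> real) \<Rightarrow> ('x \<Rightarrow> real) \<Rightarrow> real \<Rightarrow> nat \<Rightarrow> 'x \<Rightarrow> real" where
  "rowQ P f t n x = (\<Sum>z\<in>UNIV. cmod (Qm P f t n x z))"

lemma core:
  assumes m: "markov_matrix P" and h1: "H1 P" and h3: "H3 P f" and t: "t \<noteq> 0"
  shows "\<exists>mm\<ge>1. \<forall>x. rowQ P f t mm x < 1"
proof -
  obtain k0 where k0: "k0 \<ge> 1" and pos: "\<And>k x z. k \<ge> k0 \<Longrightarrow> Rm P k x z > 0"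
    using H1_pos[OF m h1] by blast
  define v :: 'a where "v = undefined"
  obtain l where l: "cmod (Qm P f t l v v) < Rm P l v v" using core_vv[OF m h1 h3 t] by blast
  have "rowQ P f t (k0 + l) x < 1" for x
  proof -
    have "rowQ P f t (k0 + l) x < (\<Sum>z\<in>UNIV. Rm P (k0 + l) x z)"
      unfolding rowQ_def
    proof (rule sum_strict_mono_ex1)
      show "\<forall>z\<in>UNIV. cmod (Qm P f t (k0 + l) x z) \<le> Rm P (k0 + l) x z" using Qm_le[OF m] by blast
      show "\<exists>z\<in>UNIV. cmod (Qm P f t (k0 + l) x z) < Rm P (k0 + l) x z"
        using strict_prop[OF m l pos[of k0 x v]] by blast
    qed simp
    then show ?thesis using Rm_sum[OF m] by simp
  qed
  then show ?thesis using k0 by (intro exI[of _ "k0 + l"]) auto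
qed

lemma Qm_cont: "continuous (at t) (\<lambda>s. Qm P f s n x z)"
  by (induction n arbitrary: x) (auto simp: Ee_def intro!: continuous_intros)

lemma rowQ_cont: "continuous (at t) (\<lambda>s. rowQ P f s n x)"
  unfolding rowQ_def by (intro continuous_intros Qm_cont)

lemma local_contr:
  assumes m: "markov_matrix P" and h1: "H1 P" and h3: "H3 P f" and t: "t \<noteq> 0"
  shows "\<exists>U. open U \<and> t \<in> U \<and> (\<exists>mm r. 1 \<le> mm \<and> 1/2 \<le> r \<and> r < 1 \<and> (\<forall>s\<in>U. \<forall>x. rowQ P f s mm x \<le> r))"
proof -
  obtain mm where mm: "mm \<ge> 1" and lt: "\<And>x. rowQ P f t mm x < 1" using core[OF m h1 h3 t] by blast
  define r0 where "r0 = Max (range (rowQ P f t mm))"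
  have r0lt: "r0 < 1" unfolding r0_def using lt by (simp add: Max_less_iff)
  have r0ge: "rowQ P f t mm x \<le> r0" for x unfolding r0_def by simp
  have r0nn: "0 \<le> r0" using r0ge[of undefined] unfolding rowQ_def by (smt (verit) norm_ge_zero sum_nonneg)
  define r where "r = (1 + r0) / 2"
  have "\<forall>x. \<forall>\<^sub>F s in at t. rowQ P f s mm x < r"
  proof
    fix x
    have "((\<lambda>s. rowQ P f s mm x) \<longlongrightarrow> rowQ P f t mm x) (at t)"
      using rowQ_cont[of t P f mm x] by (simp add: continuous_at)
    moreover have "rowQ P f t mm x < r" using r0ge[of x] r0lt by (simp add: r_def)
    ultimately show "\<forall>\<^sub>F s in at t. rowQ P f s mm x < r" by (rule order_tendstoD)
  qed
  then have "\<forall>\<^sub>F s in at t. \<forall>x. rowQ P f s mm x < r" by (intro eventually_all_finite) blast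
  then obtain U where U: "open U" "t \<in> U" "\<And>s. s \<in> U \<Longrightarrow> s \<noteq> t \<Longrightarrow> \<forall>x. rowQ P f s mm x < r"
    unfolding eventually_at_topological by blast
  have "\<forall>s\<in>U. \<forall>x. rowQ P f s mm x \<le> r"
  proof (intro ballI allI)
    fix s x assume "s \<in> U"
    show "rowQ P f s mm x \<le> r"
    proof (cases "s = t")
      case True then show ?thesis using r0ge[of x] r0lt by (simp add: r_def)
    next
      case False then show ?thesis using U(3)[OF \<open>s \<in> U\<close>] by (simp add: less_imp_le)
    qed
  qed
  moreover have "1/2 \<le> r" "r < 1" using r0nn r0lt by (simp_all add: r_def)
  ultimately show ?thesis using U mm by blast
qed

lemma rowQ_nonneg: "0 \<le> rowQ P f t n x"
  unfolding rowQ_def by (simp add: sum_nonneg)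

lemma rowQ_le1: assumes m: "markov_matrix P" shows "rowQ P f t n x \<le> 1"
proof -
  have "rowQ P f t n x \<le> (\<Sum>z\<in>UNIV. Rm P n x z)"
    unfolding rowQ_def by (rule sum_mono) (rule Qm_le[OF m])
  then show ?thesis using Rm_sum[OF m] by simp
qed

lemma row_mult:
  assumes b: "\<And>y. rowQ P f t b y \<le> \<beta>"
  shows "rowQ P f t (a + b) x \<le> rowQ P f t a x * \<beta>"
proof -
  have "rowQ P f t (a + b) x \<le> (\<Sum>z\<in>UNIV. \<Sum>y\<in>UNIV. cmod (Qm P f t a x y) * cmod (Qm P f t b y z))"
    unfolding rowQ_def Qm_add
    by (rule sum_mono) (metis (no_types, lifting) norm_mult norm_sum sum.cong)
  also have "\<dots> = (\<Sum>y\<in>UNIV. \<Sum>z\<in>UNIV. cmod (Qm P f t a x y) * cmod (Qm P f t b y z))"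
    by (rule sum.swap)
  also have "\<dots> = (\<Sum>y\<in>UNIV. cmod (Qm P f t a x y) * rowQ P f t b y)"
    by (simp add: rowQ_def sum_distrib_left)
  also have "\<dots> \<le> (\<Sum>y\<in>UNIV. cmod (Qm P f t a x y) * \<beta>)"
    by (rule sum_mono) (simp add: b mult_left_mono)
  also have "\<dots> = rowQ P f t a x * \<beta>" by (simp add: rowQ_def sum_distrib_right)
  finally show ?thesis .
qed

lemma row_pow:
  assumes m: "markov_matrix P" and r: "\<And>x. rowQ P f t mm x \<le> \<rho>" and rp: "0 \<le> \<rho>"
  shows "rowQ P f t (k * mm + j) x \<le> \<rho> ^ k"
proof (induction k arbitrary: x)
  case 0
  then show ?case using rowQ_le1[OF m] by simp
next
  case (Suc k)
  have "rowQ P f t (mm + (k * mm + j)) x \<le> rowQ P f t mm x * \<rho> ^ k"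
    by (rule row_mult) (rule Suc.IH)
  also have "\<dots> \<le> \<rho> * \<rho> ^ k" using r rp by (simp add: mult_right_mono)
  finally show ?case by (simp add: add.assoc)
qed

lemma sup_norm_ge: "cmod (g x) \<le> sup_norm g"
  unfolding sup_norm_def by simp

lemma sup_norm_le: "(\<And>x. cmod (g x) \<le> B) \<Longrightarrow> sup_norm g \<le> B"
  unfolding sup_norm_def by (simp add: Max_le_iff)

lemma ne_set: "{g::'x::finite \<Rightarrow> complex. \<exists>x. g x \<noteq> 0} \<noteq> {}"
proof -
  have "(\<lambda>_. 1) \<in> {g::'x \<Rightarrow> complex. \<exists>x. g x \<noteq> 0}" by simp
  then show ?thesis by blast
qed


lemma op_bound:
  fixes P :: "'x::finite \<Rightarrow> 'x \<Rightarrow> real"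
  assumes C: "\<And>x. rowQ P f t n x \<le> C"
  shows "op_norm (Pt P f t ^^ n) \<le> C"
  unfolding op_norm_def
proof (rule cSUP_least)
  show "{g::'x \<Rightarrow> complex. \<exists>x. g x \<noteq> 0} \<noteq> {}" by (rule ne_set)
  fix g :: "'x \<Rightarrow> complex" assume "g \<in> {g. \<exists>x. g x \<noteq> 0}"
  then obtain x0 where "g x0 \<noteq> 0" by auto
  then have "0 < cmod (g x0)" by simp
  then have gp: "sup_norm g > 0" using sup_norm_ge[of g x0] by linarith
  have "sup_norm ((Pt P f t ^^ n) g) \<le> C * sup_norm g"
  proof (rule sup_norm_le)
    fix x
    have "cmod ((Pt P f t ^^ n) g x) \<le> (\<Sum>z\<in>UNIV. cmod (Qm P f t n x z * g z))"
      unfolding Pt_pow by (rule norm_sum)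
    also have "\<dots> \<le> (\<Sum>z\<in>UNIV. cmod (Qm P f t n x z) * sup_norm g)"
      by (rule sum_mono) (simp only: norm_mult, rule mult_left_mono[OF sup_norm_ge norm_ge_zero])
    also have "\<dots> = rowQ P f t n x * sup_norm g" by (simp add: rowQ_def sum_distrib_right)
    also have "\<dots> \<le> C * sup_norm g" using C gp by (intro mult_right_mono) auto
    finally show "cmod ((Pt P f t ^^ n) g x) \<le> C * sup_norm g" .
  qed
  then show "sup_norm ((Pt P f t ^^ n) g) / sup_norm g \<le> C" using gp by (simp add: pos_divide_le_eq[OF gp])
qed

lemma exp_bound:
  assumes mm: "1 \<le> mm" "mm \<le> M" and \<rho>: "0 < \<rho>" "\<rho> < 1"
  shows "\<rho> ^ (n div mm) \<le> (1 / \<rho>) * exp (- (- ln \<rho> / real M) * real n)"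
proof -
  have l: "ln \<rho> < 0" using \<rho> by simp
  have "real n < (real (n div mm) + 1) * real mm"
  proof -
    have "n = n div mm * mm + n mod mm" by simp
    moreover have "n mod mm < mm" using mm by simp
    ultimately have "n < (n div mm + 1) * mm" by (metis add_less_cancel_left add_mult_distrib mult_1)
    then show ?thesis by (metis of_nat_1 of_nat_add of_nat_less_iff of_nat_mult)
  qed
  then have "real n / real mm < real (n div mm) + 1" using mm by (simp add: divide_less_eq)
  then have q1: "real n / real mm - 1 \<le> real (n div mm)" by linarith
  have q2: "real n / real M \<le> real n / real mm"
    by (rule divide_left_mono) (use mm in auto)
  have q3: "real n / real M - 1 \<le> real (n div mm)" using q1 q2 by linarith
  have "\<rho> ^ (n div mm) = exp (ln \<rho> * real (n div mm))"
    using \<rho> by (metis exp_ln exp_of_nat_mult mult.commute)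
  also have "\<dots> \<le> exp (ln \<rho> * (real n / real M - 1))"
    by (rule exp_mono, rule mult_left_mono_neg[OF q3]) (use l in simp)
  also have "ln \<rho> * (real n / real M - 1) = - ln \<rho> + ln \<rho> / real M * real n"
    by (simp add: algebra_simps)
  also have "exp (- ln \<rho> + ln \<rho> / real M * real n) = exp (- ln \<rho>) * exp (ln \<rho> / real M * real n)"
    by (rule exp_add)
  also have "\<dots> = (1 / \<rho>) * exp (- (- ln \<rho> / real M) * real n)"
    using \<rho> by (simp add: exp_minus divide_inverse mult.commute)
  finally show ?thesis .
qed

theorem lemma4p2:
  fixes P :: "'x::finite \<Rightarrow> 'x \<Rightarrow> real" and f :: "'x \<Rightarrow> real" and K :: "real set"
  assumes "markov_matrix P"
    and "H1 P"
    and "H3 P f"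
    and "compact K" and "0 \<notin> K"
  shows "\<exists>c c'. c > 0 \<and> c' > 0 \<and>
           (\<forall>n::nat. n \<ge> 1 \<longrightarrow>
              (\<forall>t\<in>K. op_norm (Pt P f t ^^ n) \<le> c * exp (- c' * real n)))"
proof -
  note m = assms(1) and h1 = assms(2) and h3 = assms(3)
  define Q where "Q U mm r \<longleftrightarrow> 1 \<le> mm \<and> 1/2 \<le> r \<and> r < 1 \<and> (\<forall>s\<in>U. \<forall>x. rowQ P f s mm x \<le> (r::real))"
    for U mm r
  define \<T> where "\<T> = {U. open U \<and> (\<exists>mm r. Q U mm r)}"
  have cover: "K \<subseteq> \<Union>\<T>"
  proof
    fix t assume "t \<in> K"
    have "t \<noteq> 0" using assms(5) \<open>t \<in> K\<close> by metis
    then have "\<exists>U. open U \<and> t \<in> U \<and> (\<exists>mm r. Q U mm r)"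
      using local_contr[OF m h1 h3] unfolding Q_def by simp
    then obtain U where U: "open U \<and> t \<in> U \<and> (\<exists>mm r. Q U mm r)" ..
    then have "U \<in> \<T>" unfolding \<T>_def by simp
    then show "t \<in> \<Union>\<T>" by (rule UnionI) (use U in simp)
  qed
  obtain \<T>' where T': "\<T>' \<subseteq> \<T>" "finite \<T>'" "K \<subseteq> \<Union>\<T>'"
    using compactE[OF assms(4) cover] unfolding \<T>_def by blast
  define mU where "mU U = (SOME mm. \<exists>r. Q U mm r)" for U
  define rU where "rU U = (SOME r. Q U (mU U) r)" for U
  have props: "Q U (mU U) (rU U)" if "U \<in> \<T>" for U
  proof -
    have "\<exists>mm r. Q U mm r" using that unfolding \<T>_def by blast
    then have "\<exists>r. Q U (mU U) r" unfolding mU_def by (rule someI_ex)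
    then show ?thesis unfolding rU_def by (rule someI_ex)
  qed
  define M where "M = Max (insert 1 (mU ` \<T>'))"
  define \<rho> where "\<rho> = Max (insert (1/2) (rU ` \<T>'))"
  have fin1: "finite (insert 1 (mU ` \<T>'))" and fin2: "finite (insert (1/2) (rU ` \<T>'))"
    using T'(2) by auto
  have M1: "1 \<le> M" unfolding M_def by (rule Max_ge[OF fin1]) simp
  have "\<forall>a\<in>insert (1/2) (rU ` \<T>'). a < 1"
  proof
    fix a assume "a \<in> insert (1/2) (rU ` \<T>')"
    then consider "a = 1/2" | U where "U \<in> \<T>'" "a = rU U" by blast
    then show "a < 1"
    proof cases
      case 1 then show ?thesis by simp
    next
      case 2
      then have "Q U (mU U) (rU U)" using props T'(1) by blast
      then show ?thesis using 2 unfolding Q_def by simp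
    qed
  qed
  then have \<rho>1: "\<rho> < 1" unfolding \<rho>_def using fin2 by (subst Max_less_iff) auto
  have \<rho>0: "1/2 \<le> \<rho>" unfolding \<rho>_def by (rule Max_ge[OF fin2]) simp
  then have \<rho>p: "0 < \<rho>" by simp
  define c where "c = 1 / \<rho>"
  define c' where "c' = - ln \<rho> / real M"
  have cp: "c > 0" using \<rho>p by (simp add: c_def)
  have "ln \<rho> < 0" using \<rho>p \<rho>1 by simp
  moreover have "real M > 0" using M1 by simp
  ultimately have c'p: "c' > 0" unfolding c'_def by (simp add: divide_neg_pos)
  have bound: "op_norm (Pt P f t ^^ n) \<le> c * exp (- c' * real n)" if tK: "t \<in> K" for t n
  proof -
    obtain U where U: "U \<in> \<T>'" "t \<in> U" using T'(3) tK by blast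
    have QU: "Q U (mU U) (rU U)" using props U T'(1) by blast
    define mm where "mm = mU U"
    have mm1: "1 \<le> mm" using QU by (simp add: Q_def mm_def)
    have mmM: "mm \<le> M" unfolding M_def mm_def by (rule Max_ge[OF fin1]) (use U(1) in simp)
    have rr: "rU U \<le> \<rho>" unfolding \<rho>_def by (rule Max_ge[OF fin2]) (use U(1) in simp)
    have row: "rowQ P f t mm x \<le> \<rho>" for x
    proof -
      have "rowQ P f t mm x \<le> rU U" using QU U(2) unfolding Q_def mm_def by simp
      then show ?thesis using rr by linarith
    qed
    have "rowQ P f t ((n div mm) * mm + n mod mm) x \<le> \<rho> ^ (n div mm)" for x
      by (rule row_pow[OF m row]) (use \<rho>p in simp)
    then have "rowQ P f t n x \<le> \<rho> ^ (n div mm)" for x by simp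
    then have "op_norm (Pt P f t ^^ n) \<le> \<rho> ^ (n div mm)" by (rule op_bound)
    also have "\<dots> \<le> (1 / \<rho>) * exp (- (- ln \<rho> / real M) * real n)"
      by (rule exp_bound[OF mm1 mmM \<rho>p \<rho>1])
    finally show ?thesis by (simp add: c_def c'_def)
  qed
  show ?thesis
    by (intro exI[of _ c] exI[of _ c'] conjI cp c'p allI impI ballI bound)
qed

end
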